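(* Let $E$ be a finite-dimensional complex Hilbert space, $e\in E$ a unit vector, $\tau\in(0,1)$, and $T_0\in B(E)_+$. Define $$T_{n+1}:=T_n^{1/2}\bigl(I_E-\tau|e\rangle\langle e|\bigr)T_n^{1/2}\qquad(n\ge0),$$ and let $T_\infty:=\lim_n T_n$ (norm limit, which exists since $(T_n)$ is decreasing in the operator order). Let $Q:=I_E-|e\rangle\langle e|$ be the orthogonal projection onto $e^\perp$. With respect to $E=\mathbb{C}e\oplus e^\perp$ write $$T_n=\begin{pmatrix}a_n & b_n^*\\ b_n & B_n\end{pmatrix},$$ where $a_n:=\langle e,T_ne\rangle\ge0$, $b_n:=QT_ne\in e^\perp$, $B_n:=QT_nQ\in B(e^\perp)_+$, and set $y_n:=QT_n^{1/2}e\in e^\perp$. Then: (1) $a_{n+1}=(1-\tau)a_n+\tau\|y_n\|^2$ for every $n\ge0$. (2) $\tau\sum_{n=0}^\infty\|y_n\|^2=\mathrm{tr}(B_0-B_\infty)<\infty$, where $B_\infty:=QT_\infty Q$; in particular $y_n\to0$. (3) $a_n\to0$. (4) $b_n\to0$. Consequently, with respect to $E=\mathbb{C}e\oplus e^\perp$, $$T_\infty=\begin{pmatrix}0&0\\0&B_\infty\end{pmatrix},$$ equivalently $T_\infty e=0$ and $\mathrm{ran}(T_\infty)\subseteq e^\perp$.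
   Context: For vectors $x,y$, $|x\rangle\langle y|$ denotes the operator $z\mapsto\langle y,z\rangle x$. $B(E)_+$ denotes the positive operators on $E$; $T^{1/2}$ is the positive square root. *)

theory Defs
  imports "HOL-Analysis.Analysis"
begin

text \<open>The finite-dimensional complex Hilbert space E is modelled as complex^'n
  with the standard inner product (linear in the second argument);
  operators on E are matrices complex^'n^'n acting by *v.\<close>

definition cinner :: "complex^'n \<Rightarrow> complex^'n \<Rightarrow> complex" where
  "cinner x y = (\<Sum>i\<in>UNIV. cnj (x$i) * y$i)"

definition ketbra :: "complex^'n \<Rightarrow> complex^'n \<Rightarrow> complex^'n^'n" where
  "ketbra x y = (\<chi> i j. x$i * cnj (y$j))"

definition pos_op :: "complex^'n^'n \<Rightarrow> bool" where
  "pos_op A \<longleftrightarrow> (\<forall>x. Im (cinner x (A *v x)) = 0 \<and> Re (cinner x (A *v x)) \<ge> 0)"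

definition op_sqrt :: "complex^'n^'n \<Rightarrow> complex^'n^'n" where
  "op_sqrt A = (THE S. pos_op S \<and> S ** S = A)"

end

theory Submission
  imports Defs
begin


definition adjm :: "complex^'n^'n \<Rightarrow> complex^'n^'n" where
  "adjm A = (\<chi> i j. cnj (A$j$i))"

definition herm :: "complex^'n^'n \<Rightarrow> bool" where
  "herm A \<longleftrightarrow> adjm A = A"

definition qf :: "complex^'n^'n \<Rightarrow> complex^'n \<Rightarrow> real" where
  "qf A x = Re (cinner x (A *v x))"

lemma cinner_add_right: "cinner x (y + z) = cinner x y + cinner x z"
  by (simp add: cinner_def sum.distrib algebra_simps)
lemma cinner_add_left: "cinner (x + y) z = cinner x z + cinner y z"
  by (simp add: cinner_def sum.distrib algebra_simps)
lemma cinner_diff_right: "cinner x (y - z) = cinner x y - cinner x z"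
  by (simp add: cinner_def sum_subtractf algebra_simps)
lemma cinner_diff_left: "cinner (x - y) z = cinner x z - cinner y z"
  by (simp add: cinner_def sum_subtractf algebra_simps)
lemma cinner_minus_left: "cinner (- x) z = - cinner x z"
  by (simp add: cinner_def sum_negf)
lemma cinner_minus_right: "cinner x (- z) = - cinner x z"
  by (simp add: cinner_def sum_negf)
lemma cinner_zero_left[simp]: "cinner 0 z = 0"
  by (simp add: cinner_def)
lemma cinner_zero_right[simp]: "cinner z 0 = 0"
  by (simp add: cinner_def)
lemma cinner_scaleR_left: "cinner (r *\<^sub>R x) y = of_real r * cinner x y"
  unfolding cinner_def by (simp add: sum_distrib_left) (simp add: scaleR_conv_of_real mult_ac)
lemma cinner_scaleR_right: "cinner x (r *\<^sub>R y) = of_real r * cinner x y"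
  unfolding cinner_def by (simp add: sum_distrib_left) (simp add: scaleR_conv_of_real mult_ac)
lemma cinner_smult_left: "cinner (c *s x) y = cnj c * cinner x y"
  by (simp add: cinner_def sum_distrib_left algebra_simps)
lemma cinner_smult_right: "cinner x (c *s y) = c * cinner x y"
  by (simp add: cinner_def sum_distrib_left algebra_simps)
lemma cinner_commute: "cinner y x = cnj (cinner x y)"
  by (simp add: cinner_def mult.commute)

lemma norm_sq_vec: "(norm (x::complex^'n))\<^sup>2 = (\<Sum>i\<in>UNIV. (cmod (x$i))\<^sup>2)"
  by (simp add: norm_vec_def L2_set_def sum_nonneg)

lemma cinner_self: "cinner x x = of_real ((norm x)\<^sup>2)"
proof -
  have "cinner x x = (\<Sum>i\<in>UNIV. of_real ((cmod (x$i))\<^sup>2))"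
    unfolding cinner_def by (intro sum.cong refl) (subst complex_norm_square, simp add: mult.commute)
  then show ?thesis by (simp add: norm_sq_vec)
qed

lemma Re_cinner_self: "Re (cinner x x) = (norm x)\<^sup>2"
  by (simp add: cinner_self)

lemma mv_smult: "(A::complex^'n^'n) *v (c *s x) = c *s (A *v x)"
  by (simp add: matrix_vector_mult_def vec_eq_iff sum_distrib_left algebra_simps)
lemma mv_scaleR: "(A::complex^'n^'n) *v (r *\<^sub>R x) = r *\<^sub>R (A *v x)"
  by (simp add: matrix_vector_mult_def vec_eq_iff scaleR_sum_right)
lemma scaleR_mv: "(r *\<^sub>R A::complex^'n^'n) *v x = r *\<^sub>R (A *v x)"
  by (simp add: matrix_vector_mult_def vec_eq_iff scaleR_sum_right)
lemma mv_neg: "(A::complex^'n^'n) *v (- x) = - (A *v x)"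
  by (simp add: matrix_vector_mult_def vec_eq_iff sum_negf)
lemma neg_mv: "(- A::complex^'n^'n) *v x = - (A *v x)"
  by (simp add: matrix_vector_mult_def vec_eq_iff sum_negf)

lemma mm_add_rdistrib: "((A::complex^'n^'n) + B) ** C = A ** C + B ** C"
  by (simp add: matrix_matrix_mult_def vec_eq_iff sum.distrib[symmetric] algebra_simps)
lemma mm_diff_rdistrib: "((A::complex^'n^'n) - B) ** C = A ** C - B ** C"
  by (simp add: matrix_matrix_mult_def vec_eq_iff sum_subtractf[symmetric] algebra_simps)
lemma mm_diff_ldistrib: "(C::complex^'n^'n) ** (A - B) = C ** A - C ** B"
  by (simp add: matrix_matrix_mult_def vec_eq_iff sum_subtractf[symmetric] algebra_simps)
lemma mm_scaleR_left: "((r *\<^sub>R A)::complex^'n^'n) ** B = r *\<^sub>R (A ** B)"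
  by (simp add: scalar_matrix_assoc)
lemma mm_scaleR_right: "(A::complex^'n^'n) ** (r *\<^sub>R B) = r *\<^sub>R (A ** B)"
  by (simp add: matrix_scalar_ac scalar_matrix_assoc)



lemma cinner_adj: "cinner x (A *v y) = cinner (adjm A *v x) y"
proof -
  have "cinner x (A *v y) = (\<Sum>i\<in>UNIV. \<Sum>j\<in>UNIV. cnj (x$i) * A$i$j * y$j)"
    by (simp add: cinner_def matrix_vector_mult_def sum_distrib_left mult.assoc)
  also have "\<dots> = (\<Sum>j\<in>UNIV. \<Sum>i\<in>UNIV. cnj (x$i) * A$i$j * y$j)"
    by (rule sum.swap)
  also have "\<dots> = cinner (adjm A *v x) y"
    by (simp add: cinner_def matrix_vector_mult_def adjm_def sum_distrib_left sum_distrib_right mult_ac)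
  finally show ?thesis .
qed

lemma adjm_adjm[simp]: "adjm (adjm A) = A"
  by (simp add: adjm_def vec_eq_iff)
lemma adjm_mult: "adjm (A ** B) = adjm B ** adjm A"
  by (simp add: adjm_def matrix_matrix_mult_def vec_eq_iff mult.commute)
lemma adjm_add: "adjm (A + B) = adjm A + adjm B"
  by (simp add: adjm_def vec_eq_iff)
lemma adjm_diff: "adjm (A - B) = adjm A - adjm B"
  by (simp add: adjm_def vec_eq_iff)
lemma adjm_scaleR: "adjm (r *\<^sub>R A) = r *\<^sub>R adjm A"
  by (simp add: adjm_def vec_eq_iff)
lemma adjm_mat: "adjm (mat 1) = mat 1"
  by (simp add: adjm_def mat_def vec_eq_iff)
lemma adjm_zero: "adjm 0 = 0"
  by (simp add: adjm_def vec_eq_iff)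

lemma herm_cinner: "herm A \<Longrightarrow> cinner x (A *v y) = cinner (A *v x) y"
  by (simp add: herm_def cinner_adj)

lemma herm_Im: "herm A \<Longrightarrow> Im (cinner x (A *v x)) = 0"
  using herm_cinner[of A x x] cinner_commute[of x "A *v x"]
  by (metis cnj.simps(2) neg_equal_zero)

lemma herm_real: "herm A \<Longrightarrow> cinner x (A *v x) = of_real (qf A x)"
  using herm_Im[of A x] by (simp add: qf_def complex_eq_iff)

lemma cinner_axis_left: fixes v :: "complex^'n" shows "cinner (axis i 1) v = v$i"
proof -
  have "(\<lambda>k. cnj ((axis i 1::complex^'n) $ k) * v $ k) = (\<lambda>k. if k = i then v$k else 0)"
    by (auto simp: axis_def)
  then show ?thesis unfolding cinner_def by (simp only:) simp
qed

lemma cinner_axis: fixes A :: "complex^'n^'n" shows "cinner (axis i 1) (A *v axis j 1) = A$i$j"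
proof -
  have "(\<lambda>k. A$i$k * (axis j 1::complex^'n)$k) = (\<lambda>k. if k = j then A$i$k else 0)"
    by (auto simp: axis_def)
  then show ?thesis unfolding cinner_axis_left matrix_vector_mult_def vec_lambda_beta by (simp only:) simp
qed

lemma q_add: "cinner (u+v) (A *v (u+v)) = cinner u (A *v u) + cinner v (A *v v)
   + cinner u (A *v v) + cinner v (A *v u)"
  by (simp add: matrix_vector_right_distrib cinner_add_left cinner_add_right)

lemma pos_herm: assumes "pos_op A" shows "herm A"
proof -
  have im: "Im (cinner x (A *v x)) = 0" for x using assms by (simp add: pos_op_def)
  have key: "cinner v (A *v u) = cnj (cinner u (A *v v))" for u v
  proof -
    let ?w = "cinner u (A *v v)" and ?z = "cinner v (A *v u)"
    have "Im (cinner (u+v) (A *v (u+v))) = 0" by (rule im)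
    then have 1: "Im ?w + Im ?z = 0" using im[of u] im[of v] by (simp add: q_add)
    have "Im (cinner (u + \<i> *s v) (A *v (u + \<i> *s v))) = 0" by (rule im)
    then have "Im (\<i> * ?w - \<i> * ?z) = 0" using im[of u] im[of v]
      by (simp add: q_add mv_smult cinner_smult_left cinner_smult_right)
    then have 2: "Re ?w - Re ?z = 0" by simp
    show ?thesis using 1 2 by (simp add: complex_eq_iff)
  qed
  have "adjm A $ i $ j = A $ i $ j" for i j
    using key[of "axis j 1" "axis i 1"] by (simp add: adjm_def cinner_axis)
  then show ?thesis by (simp add: herm_def vec_eq_iff)
qed

lemma pos_op_iff: "pos_op A \<longleftrightarrow> herm A \<and> (\<forall>x. qf A x \<ge> 0)"
  using pos_herm herm_Im unfolding pos_op_def qf_def by blast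



lemma mult_cnj_self: "z * cnj z = complex_of_real ((cmod z)\<^sup>2)"
  by (rule complex_norm_square[symmetric])
lemma cnj_mult_self: "cnj z * z = complex_of_real ((cmod z)\<^sup>2)"
  by (simp add: mult.commute mult_cnj_self del: of_real_power)

lemma quad_nonneg:
  fixes a b c :: real
  assumes c: "c \<ge> 0" and h: "\<And>t. 0 \<le> a + 2*b*t + c*t\<^sup>2"
  shows "b\<^sup>2 \<le> a*c"
proof (cases "c = 0")
  case True
  have "b = 0"
  proof (rule ccontr)
    assume "b \<noteq> 0"
    have "0 \<le> a + 2*b*(-(a+1)/(2*b)) + c*(-(a+1)/(2*b))\<^sup>2" by (rule h)
    then show False using True \<open>b \<noteq> 0\<close> by (simp add: field_simps)
  qed
  then show ?thesis using True by simp
next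
  case False
  then have cp: "c > 0" using c by simp
  have "0 \<le> a + 2*b*(-b/c) + c*(-b/c)\<^sup>2" by (rule h)
  also have "\<dots> = a - b\<^sup>2/c" using cp by (simp add: field_simps power2_eq_square)
  finally have "b\<^sup>2/c \<le> a" by simp
  then show ?thesis using cp by (simp add: field_simps mult.commute)
qed

lemma qf_add_herm: assumes "herm A"
  shows "qf A (u+v) = qf A u + qf A v + 2 * Re (cinner v (A *v u))"
proof -
  have "cinner u (A *v v) = cnj (cinner v (A *v u))"
    using herm_cinner[OF assms, of u v] cinner_commute[of "A *v u" v] by simp
  then show ?thesis unfolding qf_def q_add by simp
qed

lemma qf_smult: "qf A (c *s x) = (cmod c)\<^sup>2 * qf A x"
proof -
  have "cinner (c *s x) (A *v (c *s x)) = (cnj c * c) * cinner x (A *v x)"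
    by (simp add: mv_smult cinner_smult_left cinner_smult_right)
  also have "cnj c * c = of_real ((cmod c)\<^sup>2)" by (rule cnj_mult_self)
  finally show ?thesis unfolding qf_def by simp
qed

lemma qf_scaleR: "qf A (r *\<^sub>R x) = r\<^sup>2 * qf A x"
  by (simp add: qf_def mv_scaleR cinner_scaleR_left cinner_scaleR_right power2_eq_square)

lemma qf_nonneg: "pos_op A \<Longrightarrow> 0 \<le> qf A x"
  by (simp add: pos_op_iff)

lemma pos_cs:
  assumes A: "pos_op A"
  shows "(cmod (cinner y (A *v x)))\<^sup>2 \<le> qf A y * qf A x"
proof (cases "cinner y (A *v x) = 0")
  case True
  then show ?thesis using qf_nonneg[OF A] by simp
next
  case False
  define z where "z = cinner y (A *v x)"
  have zn: "cmod z > 0" using False z_def by simp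
  define l where "l = z / of_real (cmod z)"
  define w where "w = l *s y"
  have lm: "cmod l = 1" using zn by (simp add: l_def norm_divide)
  have wz: "cinner w (A *v x) = of_real (cmod z)"
  proof -
    have "cinner w (A *v x) = cnj l * z" by (simp add: w_def cinner_smult_left z_def)
    also have "\<dots> = cnj z * z / of_real (cmod z)" by (simp add: l_def)
    also have "cnj z * z = of_real ((cmod z)\<^sup>2)" by (rule cnj_mult_self)
    finally show ?thesis using zn by (simp add: power2_eq_square)
  qed
  have qw: "qf A w = qf A y" by (simp add: w_def qf_smult lm)
  have H: "herm A" using A pos_op_iff by blast
  have "0 \<le> qf A x + 2 * cmod z * t + qf A y * t\<^sup>2" for t
  proof -
    have "0 \<le> qf A (x + t *\<^sub>R w)" by (rule qf_nonneg[OF A])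
    also have "\<dots> = qf A x + qf A (t *\<^sub>R w) + 2 * Re (cinner (t *\<^sub>R w) (A *v x))"
      by (rule qf_add_herm[OF H])
    also have "\<dots> = qf A x + 2 * cmod z * t + qf A y * t\<^sup>2"
      by (simp add: qf_scaleR qw cinner_scaleR_left wz)
    finally show ?thesis .
  qed
  from quad_nonneg[OF qf_nonneg[OF A] this] show ?thesis
    by (simp add: z_def mult.commute)
qed

lemma pos_qf_zero:
  assumes A: "pos_op A" and q: "qf A u = 0"
  shows "A *v u = 0"
proof -
  have "(cmod (cinner (A *v u) (A *v u)))\<^sup>2 \<le> qf A (A *v u) * qf A u" by (rule pos_cs[OF A])
  then have "cinner (A *v u) (A *v u) = 0" using q by simp
  then show ?thesis by (simp add: cinner_self)
qed

lemma qf_mat1: "qf (mat 1) x = (norm x)\<^sup>2"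
  by (simp add: qf_def Re_cinner_self)

lemma pos_mat1: "pos_op (mat 1)"
  by (simp add: pos_op_iff herm_def adjm_mat qf_mat1)

lemma cinner_cs: "cmod (cinner x y) \<le> norm x * norm y"
proof -
  have "(cmod (cinner x (mat 1 *v y)))\<^sup>2 \<le> qf (mat 1) x * qf (mat 1) y" by (rule pos_cs[OF pos_mat1])
  then have "(cmod (cinner x y))\<^sup>2 \<le> (norm x * norm y)\<^sup>2" by (simp add: qf_mat1 power_mult_distrib)
  then show ?thesis by (rule power2_le_imp_le) simp
qed

lemma qf_le: "qf A x \<le> norm x * norm (A *v x)"
  unfolding qf_def using cinner_cs[of x "A *v x"] complex_Re_le_cmod order_trans by blast

lemma qf_add: "qf (A + B) x = qf A x + qf B x"
  by (simp add: qf_def matrix_vector_mult_add_rdistrib cinner_add_right)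
lemma qf_diff: "qf (A - B) x = qf A x - qf B x"
  by (simp add: qf_def matrix_vector_mult_diff_rdistrib cinner_diff_right)
lemma qf_scaleRm: "qf (r *\<^sub>R A) x = r * qf A x"
  by (simp add: qf_def scaleR_mv cinner_scaleR_right)
lemma qf_zero[simp]: "qf 0 x = 0"
  by (simp add: qf_def)

lemma herm_add: "herm A \<Longrightarrow> herm B \<Longrightarrow> herm (A + B)" by (simp add: herm_def adjm_add)
lemma herm_diff: "herm A \<Longrightarrow> herm B \<Longrightarrow> herm (A - B)" by (simp add: herm_def adjm_diff)
lemma herm_scaleR: "herm A \<Longrightarrow> herm (r *\<^sub>R A)" by (simp add: herm_def adjm_scaleR)
lemma herm_zero: "herm 0" by (simp add: herm_def adjm_zero)
lemma herm_mat1: "herm (mat 1)" by (simp add: herm_def adjm_mat)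

lemma pos_add: "pos_op A \<Longrightarrow> pos_op B \<Longrightarrow> pos_op (A + B)"
  by (simp add: pos_op_iff herm_add qf_add)
lemma pos_scaleR: "pos_op A \<Longrightarrow> 0 \<le> r \<Longrightarrow> pos_op (r *\<^sub>R A)"
  by (simp add: pos_op_iff herm_scaleR qf_scaleRm)
lemma pos_zero: "pos_op 0"
  by (simp add: pos_op_iff herm_zero)

lemma qf_congr: "qf (adjm M ** P ** M) x = qf P (M *v x)"
  by (simp add: qf_def matrix_vector_mul_assoc[symmetric] cinner_adj)

lemma pos_congr: assumes "pos_op P" shows "pos_op (adjm M ** P ** M)"
proof -
  have H: "herm P" using assms pos_op_iff by blast
  have "herm (adjm M ** P ** M)"
    using H by (simp add: herm_def adjm_mult matrix_mul_assoc)
  then show ?thesis using assms by (simp add: pos_op_iff qf_congr)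
qed

lemma ketbra_mv: "ketbra u v *v x = cinner v x *s u"
  by (simp add: ketbra_def matrix_vector_mult_def cinner_def vec_eq_iff sum_distrib_left mult_ac)

lemma mm_ketbra: "M ** ketbra u v ** N = ketbra (M *v u) (adjm N *v v)"
  unfolding matrix_eq
  by (simp add: matrix_vector_mul_assoc[symmetric] ketbra_mv mv_smult cinner_adj)

lemma herm_ketbra: "herm (ketbra u u)"
  by (simp add: herm_def adjm_def ketbra_def vec_eq_iff)

lemma qf_ketbra: "qf (ketbra u u) x = (cmod (cinner u x))\<^sup>2"
proof -
  have "cinner x (ketbra u u *v x) = cinner u x * cnj (cinner u x)"
    by (simp add: ketbra_mv cinner_smult_right cinner_commute[of x u])
  also have "\<dots> = of_real ((cmod (cinner u x))\<^sup>2)" by (rule mult_cnj_self)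
  finally show ?thesis by (simp add: qf_def)
qed

lemma pos_ketbra: "pos_op (ketbra u u)"
  by (simp add: pos_op_iff herm_ketbra qf_ketbra)

lemma trace_ketbra: "trace (ketbra u u) = of_real ((norm u)\<^sup>2)"
  using cinner_self[of u] by (simp add: trace_def ketbra_def cinner_def mult.commute)



lemma tendsto_mm:
  fixes X Y :: "'b \<Rightarrow> complex^'n^'n"
  assumes "(X \<longlongrightarrow> A) F" "(Y \<longlongrightarrow> B) F"
  shows "((\<lambda>n. X n ** Y n) \<longlongrightarrow> A ** B) F"
  unfolding matrix_matrix_mult_def by (intro tendsto_intros assms)

lemma tendsto_mv:
  fixes X :: "'b \<Rightarrow> complex^'n^'n"
  assumes "(X \<longlongrightarrow> A) F" "(Y \<longlongrightarrow> y) F"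
  shows "((\<lambda>n. X n *v Y n) \<longlongrightarrow> A *v y) F"
  unfolding matrix_vector_mult_def by (intro tendsto_intros assms)

lemma tendsto_cinner:
  fixes X Y :: "'b \<Rightarrow> complex^'n"
  assumes "(X \<longlongrightarrow> x) F" "(Y \<longlongrightarrow> y) F"
  shows "((\<lambda>n. cinner (X n) (Y n)) \<longlongrightarrow> cinner x y) F"
  unfolding cinner_def by (intro tendsto_intros assms)

lemma tendsto_adjm:
  fixes X :: "'b \<Rightarrow> complex^'n^'n"
  assumes "(X \<longlongrightarrow> A) F"
  shows "((\<lambda>n. adjm (X n)) \<longlongrightarrow> adjm A) F"
  unfolding adjm_def by (intro tendsto_intros assms)

lemma tendsto_trace:
  fixes X :: "'b \<Rightarrow> complex^'n^'n"
  assumes "(X \<longlongrightarrow> A) F"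
  shows "((\<lambda>n. trace (X n)) \<longlongrightarrow> trace A) F"
  unfolding trace_def by (intro tendsto_intros assms)

lemma tendsto_qf:
  fixes X :: "'b \<Rightarrow> complex^'n^'n"
  assumes "(X \<longlongrightarrow> A) F"
  shows "((\<lambda>n. qf (X n) x) \<longlongrightarrow> qf A x) F"
  unfolding qf_def by (intro tendsto_intros tendsto_cinner tendsto_mv assms)

lemma herm_limit:
  fixes X :: "nat \<Rightarrow> complex^'n^'n"
  assumes "X \<longlonglongrightarrow> A" "\<And>n. herm (X n)"
  shows "herm A"
proof -
  have "(\<lambda>n. adjm (X n)) \<longlonglongrightarrow> adjm A" by (rule tendsto_adjm[OF assms(1)])
  then have "X \<longlonglongrightarrow> adjm A" using assms(2) by (simp add: herm_def)
  then show ?thesis using assms(1) LIMSEQ_unique herm_def by metis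
qed

lemma pos_limit:
  fixes X :: "nat \<Rightarrow> complex^'n^'n"
  assumes "X \<longlonglongrightarrow> A" "\<And>n. pos_op (X n)"
  shows "pos_op A"
proof -
  have "herm A" using herm_limit[OF assms(1)] assms(2) pos_op_iff by blast
  moreover have "qf A x \<ge> 0" for x
    using tendsto_qf[OF assms(1), of x] assms(2)
    by (intro LIMSEQ_le_const) (auto simp: qf_nonneg)
  ultimately show ?thesis by (simp add: pos_op_iff)
qed

lemma polarization4:
  fixes A :: "complex^'n^'n"
  shows "4 * cinner x (A *v y) = (cinner (x+y) (A *v (x+y)) - cinner (x-y) (A *v (x-y))
     - \<i> * cinner (x + \<i> *s y) (A *v (x + \<i> *s y)) + \<i> * cinner (x - \<i> *s y) (A *v (x - \<i> *s y)))"
  by (simp add: matrix_vector_right_distrib matrix_vector_mult_diff_distrib mv_smult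
      cinner_add_left cinner_add_right cinner_diff_left cinner_diff_right
      cinner_smult_left cinner_smult_right algebra_simps)

lemma polarization:
  fixes A :: "complex^'n^'n"
  shows "cinner x (A *v y) = (cinner (x+y) (A *v (x+y)) - cinner (x-y) (A *v (x-y))
     - \<i> * cinner (x + \<i> *s y) (A *v (x + \<i> *s y)) + \<i> * cinner (x - \<i> *s y) (A *v (x - \<i> *s y))) / 4"
  unfolding polarization4[symmetric] by simp

lemma mono_conv:
  fixes M :: "nat \<Rightarrow> complex^'n^'n"
  assumes H: "\<And>n. herm (M n)" and inc: "\<And>n. pos_op (M (Suc n) - M n)"
    and bd: "\<And>n x. qf (M n) x \<le> \<beta> * (norm x)\<^sup>2"
  shows "convergent M"
proof -
  have "\<exists>l. (\<lambda>n. cinner v (M n *v v)) \<longlonglongrightarrow> l" for v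
  proof -
    have "incseq (\<lambda>n. qf (M n) v)"
    proof (rule incseq_SucI)
      fix n
      have "0 \<le> qf (M (Suc n) - M n) v" using inc qf_nonneg by blast
      then show "qf (M n) v \<le> qf (M (Suc n)) v" by (simp add: qf_diff)
    qed
    moreover have "bdd_above (range (\<lambda>n. qf (M n) v))"
      using bd by (intro bdd_aboveI) auto
    ultimately have "(\<lambda>n. qf (M n) v) \<longlonglongrightarrow> (SUP n. qf (M n) v)"
      by (intro LIMSEQ_incseq_SUP)
    then have "(\<lambda>n. complex_of_real (qf (M n) v)) \<longlonglongrightarrow> of_real (SUP n. qf (M n) v)"
      by (intro tendsto_intros)
    then show ?thesis using herm_real[OF H] by auto
  qed
  then obtain Lq where Lq: "\<And>v. (\<lambda>n. cinner v (M n *v v)) \<longlonglongrightarrow> Lq v" by metis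
  have E: "(\<lambda>n. cinner x (M n *v y)) \<longlonglongrightarrow> (Lq (x+y) - Lq (x-y) - \<i> * Lq (x + \<i> *s y) + \<i> * Lq (x - \<i> *s y)) / 4" for x y
    unfolding polarization[of x _ y] by (intro tendsto_intros Lq) simp
  define L :: "complex^'n^'n" where "L = (\<chi> i j. (Lq (axis i 1 + axis j 1) - Lq (axis i 1 - axis j 1)
      - \<i> * Lq (axis i 1 + \<i> *s axis j 1) + \<i> * Lq (axis i 1 - \<i> *s axis j 1)) / 4)"
  have "M \<longlonglongrightarrow> L"
  proof (rule vec_tendstoI)
    fix i show "(\<lambda>n. M n $ i) \<longlonglongrightarrow> L $ i"
    proof (rule vec_tendstoI)
      fix j show "(\<lambda>n. M n $ i $ j) \<longlonglongrightarrow> L $ i $ j"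
        using E[of "axis i 1" "axis j 1"] by (simp add: cinner_axis L_def)
    qed
  qed
  then show ?thesis by (auto simp: convergent_def)
qed

lemma mv_bound: "\<exists>K>0. \<forall>x. norm ((A::complex^'n^'n) *v x) \<le> K * norm x"
proof -
  have "bounded_linear (\<lambda>x::complex^'n. A *v x)" by (simp add: linear_conv_bounded_linear)
  from bounded_linear.pos_bounded[OF this] show ?thesis by (auto simp: mult.commute)
qed



fun mpow :: "complex^'n^'n \<Rightarrow> nat \<Rightarrow> complex^'n^'n" where
  "mpow B 0 = mat 1"
| "mpow B (Suc k) = B ** mpow B k"

lemma mpow_add: "mpow B (j + k) = mpow B j ** mpow B k"
  by (induction j) (auto simp: matrix_mul_assoc)

lemma mpow_comm: assumes "X ** B = B ** X" shows "X ** mpow B k = mpow B k ** X"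
proof (induction k)
  case 0 then show ?case by simp
next
  case (Suc k)
  have "X ** (B ** mpow B k) = (X ** B) ** mpow B k" by (simp add: matrix_mul_assoc)
  also have "\<dots> = B ** (X ** mpow B k)" using assms by (simp add: matrix_mul_assoc)
  also have "\<dots> = (B ** mpow B k) ** X" using Suc by (simp add: matrix_mul_assoc)
  finally show ?case by simp
qed

lemma herm_mpow: assumes "herm B" shows "herm (mpow B k)"
proof (induction k)
  case 0 then show ?case by (simp add: herm_mat1)
next
  case (Suc k)
  have "adjm (B ** mpow B k) = mpow B k ** B" using Suc assms by (simp add: herm_def adjm_mult)
  also have "\<dots> = B ** mpow B k" using mpow_comm[of B B k] by simp
  finally show ?case by (simp add: herm_def)
qed

lemma pos_mpow: assumes B: "pos_op B" shows "pos_op (mpow B k)"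
proof -
  have H: "herm B" using B pos_op_iff by blast
  have HP: "adjm (mpow B j) = mpow B j" for j using herm_mpow[OF H] by (simp add: herm_def)
  obtain j where "k = j + j \<or> k = j + Suc j"
  proof -
    have "k = k div 2 + k div 2 \<or> k = k div 2 + Suc (k div 2)" by presburger
    then show ?thesis using that by blast
  qed
  then show ?thesis
  proof
    assume k: "k = j + j"
    have "mpow B k = adjm (mpow B j) ** mat 1 ** mpow B j" by (simp add: k mpow_add HP)
    then show ?thesis using pos_congr[OF pos_mat1] by simp
  next
    assume k: "k = j + Suc j"
    have "mpow B k = mpow B j ** (B ** mpow B j)" unfolding k mpow_add by simp
    then have "mpow B k = adjm (mpow B j) ** B ** mpow B j" by (simp add: HP matrix_mul_assoc)
    then show ?thesis using pos_congr[OF B] by simp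
  qed
qed

inductive_set pcone :: "complex^'n^'n \<Rightarrow> (complex^'n^'n) set" for B where
  pc0: "0 \<in> pcone B"
| pcS: "X \<in> pcone B \<Longrightarrow> 0 \<le> r \<Longrightarrow> X + r *\<^sub>R mpow B k \<in> pcone B"

lemma pc_add: assumes "X \<in> pcone B" "Y \<in> pcone B" shows "X + Y \<in> pcone B"
  using assms(2)
proof induction
  case pc0 then show ?case using assms(1) by simp
next
  case (pcS Y r k)
  then show ?case using pcone.pcS[of "X + Y" B r k] by (simp add: add.assoc)
qed

lemma pc_scale: assumes "X \<in> pcone B" "0 \<le> c" shows "c *\<^sub>R X \<in> pcone B"
  using assms(1)
proof induction
  case pc0 then show ?case by (simp add: pcone.pc0)
next
  case (pcS X r k)
  then show ?case using pcone.pcS[of "c *\<^sub>R X" B "c * r" k] assms(2) by (simp add: scaleR_add_right)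
qed

lemma pc_pow: "0 \<le> r \<Longrightarrow> r *\<^sub>R mpow B k \<in> pcone B"
  using pcone.pcS[OF pcone.pc0, of r B k] by simp

lemma pc_B: "B \<in> pcone B"
  using pc_pow[of 1 B 1] by simp

lemma pc_mult_pow: assumes "X \<in> pcone B" shows "X ** mpow B k \<in> pcone B"
  using assms
proof induction
  case pc0 then show ?case by (simp add: pcone.pc0)
next
  case (pcS X r j)
  have "(X + r *\<^sub>R mpow B j) ** mpow B k = X ** mpow B k + r *\<^sub>R mpow B (j + k)"
    by (simp add: mm_add_rdistrib mm_scaleR_left mpow_add)
  then show ?case using pcS pcone.pcS by simp
qed

lemma pc_mult: assumes "X \<in> pcone B" "Y \<in> pcone B" shows "X ** Y \<in> pcone B"
  using assms(2)
proof induction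
  case pc0 then show ?case by (simp add: pcone.pc0)
next
  case (pcS Y r k)
  have "X ** (Y + r *\<^sub>R mpow B k) = X ** Y + r *\<^sub>R (X ** mpow B k)"
    by (simp add: matrix_add_ldistrib mm_scaleR_right)
  then show ?case using pcS.IH pcS.hyps(2) by (auto intro!: pc_add pc_scale pc_mult_pow[OF assms(1)])
qed

lemma pc_comm: assumes "X \<in> pcone B" "Z ** B = B ** Z" shows "X ** Z = Z ** X"
  using assms(1)
proof induction
  case pc0 then show ?case by simp
next
  case (pcS X r k)
  then show ?case using mpow_comm[OF assms(2), of k]
    by (simp add: mm_add_rdistrib matrix_add_ldistrib mm_scaleR_left mm_scaleR_right)
qed

lemma pc_pos: assumes "pos_op B" "X \<in> pcone B" shows "pos_op X"
  using assms(2)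
proof induction
  case pc0 then show ?case by (rule pos_zero)
next
  case (pcS X r k)
  then show ?case using pos_add pos_scaleR pos_mpow[OF assms(1)] by blast
qed

fun citer :: "complex^'n^'n \<Rightarrow> nat \<Rightarrow> complex^'n^'n" where
  "citer B 0 = 0"
| "citer B (Suc n) = (1/2) *\<^sub>R (B + citer B n ** citer B n)"

lemma citer_pc: "citer B n \<in> pcone B"
proof (induction n)
  case 0 then show ?case by (simp add: pcone.pc0)
next
  case (Suc n) then show ?case by simp (intro pc_scale pc_add pc_B pc_mult, simp_all)
qed

lemma citer_comm: "citer B m ** citer B n = citer B n ** citer B m"
proof -
  have cb: "citer B k ** B = B ** citer B k" for k using pc_comm[OF citer_pc[of B k], of B] by simp
  show ?thesis using pc_comm[OF citer_pc[of B m], of "citer B n"] cb[of n] by simp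
qed

lemma citer_inc: "citer B (Suc n) - citer B n \<in> pcone B"
proof (induction n)
  case 0 then show ?case by (auto intro: pc_scale pc_B)
next
  case (Suc n)
  define X where "X = citer B (Suc n)"
  define Y where "Y = citer B n"
  have c: "X ** Y = Y ** X" unfolding X_def Y_def by (rule citer_comm)
  have e1: "citer B (Suc (Suc n)) = (1/2) *\<^sub>R (B + X ** X)" unfolding X_def by (rule citer.simps(2))
  have e2: "X = (1/2) *\<^sub>R (B + Y ** Y)" unfolding X_def Y_def by (rule citer.simps(2))
  have e3: "(X - Y) ** (X + Y) = X ** X - Y ** Y"
    by (simp add: mm_diff_rdistrib matrix_add_ldistrib c algebra_simps)
  have e4: "(1/2) *\<^sub>R (B + X ** X) - (1/2) *\<^sub>R (B + Y ** Y) = (1/2) *\<^sub>R ((X - Y) ** (X + Y))"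
    by (simp add: e3 algebra_simps)
  have eq: "citer B (Suc (Suc n)) - citer B (Suc n) = (1/2) *\<^sub>R ((X - Y) ** (X + Y))"
    unfolding e4[symmetric] by (simp only: e1 X_def[symmetric]) (simp only: e2)
  have mem: "(X - Y) ** (X + Y) \<in> pcone B"
    unfolding X_def Y_def using Suc.IH citer_pc[of B "Suc n"] citer_pc[of B n] by (blast intro: pc_mult pc_add)
  show ?case unfolding eq by (rule pc_scale[OF mem]) simp
qed

lemma citer_contr:
  assumes hB: "\<And>x. norm (B *v x) \<le> norm x"
  shows "norm (citer B n *v x) \<le> norm x"
proof (induction n arbitrary: x)
  case 0 then show ?case by simp
next
  case (Suc n)
  have "norm (citer B (Suc n) *v x) = (1/2) * norm (B *v x + citer B n *v (citer B n *v x))"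
    by (simp add: scaleR_mv matrix_vector_mult_add_rdistrib matrix_vector_mul_assoc)
  also have "\<dots> \<le> (1/2) * (norm (B *v x) + norm (citer B n *v (citer B n *v x)))"
    by (simp add: norm_triangle_ineq)
  also have "\<dots> \<le> (1/2) * (norm x + norm x)"
    using hB[of x] Suc[of "citer B n *v x"] Suc[of x] by simp
  finally show ?case by simp
qed

lemma sqrt_aux:
  assumes B: "pos_op B" and hB: "\<And>x. norm (B *v x) \<le> norm x"
  shows "\<exists>S. pos_op S \<and> S ** S = mat 1 - B \<and> (\<forall>Z. Z ** B = B ** Z \<longrightarrow> Z ** S = S ** Z)"
proof -
  have posc: "pos_op (citer B n)" for n by (rule pc_pos[OF B citer_pc])
  have Hc: "herm (citer B n)" for n using posc pos_op_iff by blast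
  have bdc: "qf (citer B n) x \<le> 1 * (norm x)\<^sup>2" for n x
  proof -
    have "qf (citer B n) x \<le> norm x * norm (citer B n *v x)" by (rule qf_le)
    also have "\<dots> \<le> norm x * norm x" by (intro mult_left_mono citer_contr hB) simp
    finally show ?thesis by (simp add: power2_eq_square)
  qed
  have "convergent (citer B)"
    by (rule mono_conv[where M="citer B" and \<beta>=1, OF Hc pc_pos[OF B citer_inc] bdc])
  then obtain C where lim: "citer B \<longlonglongrightarrow> C" by (auto simp: convergent_def)
  have "(\<lambda>n. citer B (Suc n)) \<longlonglongrightarrow> C" using lim by (rule LIMSEQ_Suc)
  moreover have "(\<lambda>n. citer B (Suc n)) \<longlonglongrightarrow> (1/2) *\<^sub>R (B + C ** C)"
    unfolding citer.simps by (intro tendsto_intros tendsto_mm lim)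
  ultimately have fixeq: "C = (1/2) *\<^sub>R (B + C ** C)" by (rule LIMSEQ_unique)
  have CC: "C ** C = C + C - B"
  proof -
    have "2 *\<^sub>R C = B + C ** C" by (subst fixeq) simp
    then show ?thesis by (simp add: scaleR_2 algebra_simps)
  qed
  have HC: "herm C" by (rule herm_limit[OF lim Hc])
  have qC: "qf C x \<le> (norm x)\<^sup>2" for x
    using tendsto_qf[OF lim, of x] bdc by (intro LIMSEQ_le_const2) auto
  define S where "S = mat 1 - C"
  have "pos_op S" using HC qC by (simp add: S_def pos_op_iff herm_diff herm_mat1 qf_diff qf_mat1)
  moreover have "S ** S = mat 1 - B"
  proof -
    have "S ** S = (mat 1 - C) - (C - C ** C)" by (simp add: S_def mm_diff_rdistrib mm_diff_ldistrib)
    also have "\<dots> = mat 1 - B" unfolding CC by (simp add: algebra_simps)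
    finally show ?thesis .
  qed
  moreover have "Z ** S = S ** Z" if Z: "Z ** B = B ** Z" for Z
  proof -
    have "Z ** citer B n = citer B n ** Z" for n using pc_comm[OF citer_pc Z] by metis
    moreover have "(\<lambda>n. Z ** citer B n) \<longlonglongrightarrow> Z ** C" by (intro tendsto_mm tendsto_const lim)
    moreover have "(\<lambda>n. citer B n ** Z) \<longlonglongrightarrow> C ** Z" by (intro tendsto_mm tendsto_const lim)
    ultimately have "Z ** C = C ** Z" using LIMSEQ_unique by fastforce
    then show ?thesis by (simp add: S_def mm_diff_rdistrib mm_diff_ldistrib)
  qed
  ultimately show ?thesis by blast
qed



lemma norm_mv_sq_le:
  assumes A: "pos_op A" and K: "\<And>x. norm (A *v x) \<le> K * norm x" and Kp: "K > 0"
  shows "(norm (A *v x))\<^sup>2 \<le> K * qf A x"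
proof (cases "norm (A *v x) = 0")
  case True then show ?thesis using qf_nonneg[OF A] Kp by simp
next
  case False
  have cn: "cmod (cinner (A *v x) (A *v x)) = (norm (A *v x))\<^sup>2"
    unfolding cinner_self norm_of_real by simp
  have "((norm (A *v x))\<^sup>2)\<^sup>2 \<le> qf A (A *v x) * qf A x" using pos_cs[OF A, of "A *v x" x] by (simp only: cn)
  also have "qf A (A *v x) \<le> K * (norm (A *v x))\<^sup>2"
  proof -
    have "qf A (A *v x) \<le> norm (A *v x) * norm (A *v (A *v x))" by (rule qf_le)
    also have "\<dots> \<le> norm (A *v x) * (K * norm (A *v x))" by (intro mult_left_mono K) simp
    finally show ?thesis by (simp add: power2_eq_square mult_ac)
  qed
  then have "qf A (A *v x) * qf A x \<le> K * (norm (A *v x))\<^sup>2 * qf A x"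
    by (intro mult_right_mono qf_nonneg[OF A])
  finally have h: "((norm (A *v x))\<^sup>2)\<^sup>2 \<le> K * (norm (A *v x))\<^sup>2 * qf A x" .
  define m where "m = (norm (A *v x))\<^sup>2"
  have mpos: "m > 0" using False by (simp add: m_def)
  have h2: "m * m \<le> m * (K * qf A x)" using h unfolding m_def[symmetric] by (simp add: power2_eq_square mult_ac)
  have "m \<le> K * qf A x" using h2 mpos by (simp add: mult_le_cancel_left_pos)
  then show ?thesis by (simp add: m_def)
qed

lemma sqrt_exists:
  assumes A: "pos_op A"
  shows "\<exists>S. pos_op S \<and> S ** S = A \<and> (\<forall>Z. Z ** A = A ** Z \<longrightarrow> Z ** S = S ** Z)"
proof -
  obtain K where Kp: "K > 0" and K: "\<And>x. norm (A *v x) \<le> K * norm x" using mv_bound[of A] by blast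
  have HA: "herm A" using A pos_op_iff by blast
  define B where "B = mat 1 - (1/K) *\<^sub>R A"
  have HB: "herm B" unfolding B_def by (intro herm_diff herm_mat1 herm_scaleR HA)
  have qA: "qf A x \<le> K * (norm x)\<^sup>2" for x
  proof -
    have "qf A x \<le> norm x * norm (A *v x)" by (rule qf_le)
    also have "\<dots> \<le> norm x * (K * norm x)" by (intro mult_left_mono K) simp
    finally show ?thesis by (simp add: power2_eq_square mult_ac)
  qed
  have posB: "pos_op B"
  proof -
    have "qf B x \<ge> 0" for x
    proof -
      have "qf B x = (norm x)\<^sup>2 - (1/K) * qf A x" by (simp add: B_def qf_diff qf_mat1 qf_scaleRm)
      moreover have "(1/K) * qf A x \<le> (norm x)\<^sup>2" using qA[of x] Kp by (simp add: field_simps)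
      ultimately show ?thesis by simp
    qed
    then show ?thesis using HB by (simp add: pos_op_iff)
  qed
  have contr: "norm (B *v x) \<le> norm x" for x
  proof -
    have Bx: "B *v x = x - (1/K) *\<^sub>R (A *v x)"
      by (simp add: B_def matrix_vector_mult_diff_rdistrib scaleR_mv)
    have c1: "Re (cinner (A *v x) x) = qf A x"
      using herm_cinner[OF HA, of x x] by (simp add: qf_def)
    have "(norm (B *v x))\<^sup>2 = Re (cinner (B *v x) (B *v x))" by (simp add: Re_cinner_self)
    also have "\<dots> = (norm x)\<^sup>2 - 2 * (1/K) * qf A x + (1/K)\<^sup>2 * (norm (A *v x))\<^sup>2"
      unfolding Bx using Kp
      by (simp add: cinner_diff_left cinner_diff_right cinner_scaleR_left cinner_scaleR_right
          Re_cinner_self c1 power2_eq_square) (simp add: qf_def field_simps)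
    also have "\<dots> \<le> (norm x)\<^sup>2 - 2 * (1/K) * qf A x + (1/K)\<^sup>2 * (K * qf A x)"
      by (intro add_left_mono mult_left_mono norm_mv_sq_le[OF A K Kp]) simp
    also have "\<dots> = (norm x)\<^sup>2 - (1/K) * qf A x" using Kp by (simp add: power2_eq_square field_simps)
    also have "\<dots> \<le> (norm x)\<^sup>2" using qf_nonneg[OF A, of x] Kp by simp
    finally show ?thesis by (rule power2_le_imp_le) simp
  qed
  obtain S0 where S0: "pos_op S0" "S0 ** S0 = mat 1 - B" and
    S0c: "\<And>Z. Z ** B = B ** Z \<Longrightarrow> Z ** S0 = S0 ** Z"
    using sqrt_aux[OF posB contr] by blast
  define S where "S = sqrt K *\<^sub>R S0"
  have "pos_op S" unfolding S_def by (rule pos_scaleR[OF S0(1)]) (use Kp in simp)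
  moreover have "S ** S = A"
  proof -
    have "S ** S = (sqrt K * sqrt K) *\<^sub>R (S0 ** S0)" by (simp add: S_def mm_scaleR_left mm_scaleR_right)
    also have "\<dots> = K *\<^sub>R ((1/K) *\<^sub>R A)" using Kp by (simp add: S0(2) B_def)
    also have "\<dots> = A" using Kp by simp
    finally show ?thesis .
  qed
  moreover have "Z ** S = S ** Z" if Z: "Z ** A = A ** Z" for Z
  proof -
    have "Z ** B = B ** Z" using Z by (simp add: B_def mm_diff_rdistrib mm_diff_ldistrib mm_scaleR_left mm_scaleR_right)
    then show ?thesis using S0c by (simp add: S_def mm_scaleR_left mm_scaleR_right)
  qed
  ultimately show ?thesis by blast
qed

lemma sqrt_unique:
  assumes S: "pos_op S" "S ** S = A" and Sc: "\<And>Z. Z ** A = A ** Z \<Longrightarrow> Z ** S = S ** Z"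
    and R: "pos_op R" "R ** R = A"
  shows "R = S"
proof -
  have "R ** A = A ** R" by (simp add: R(2)[symmetric] matrix_mul_assoc)
  then have RS: "R ** S = S ** R" by (rule Sc)
  define X where "X = S - R"
  have HS: "herm S" using S pos_op_iff by blast
  have HR: "herm R" using R pos_op_iff by blast
  have HX: "herm X" unfolding X_def by (intro herm_diff HS HR)
  have adX: "adjm X = X" using HX herm_def by blast
  have "X ** (S + R) = 0"
    by (simp add: X_def mm_diff_rdistrib matrix_add_ldistrib S(2) R(2) RS)
  then have "X ** S ** X + X ** R ** X = 0"
    by (metis matrix_add_ldistrib mm_add_rdistrib matrix_mul_assoc times0_left)
  then have sum0: "qf S (X *v v) + qf R (X *v v) = 0" for v
    using qf_congr[of X S v] qf_congr[of X R v] adX qf_add[of "X ** S ** X" "X ** R ** X" v] by simp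
  have z: "X *v (X *v v) = 0" for v
  proof -
    have "qf S (X *v v) = 0" "qf R (X *v v) = 0"
      using sum0[of v] qf_nonneg[OF S(1), of "X *v v"] qf_nonneg[OF R(1), of "X *v v"] by linarith+
    then have "S *v (X *v v) = 0" "R *v (X *v v) = 0" using pos_qf_zero S(1) R(1) by blast+
    then show ?thesis by (simp add: X_def matrix_vector_mult_diff_rdistrib)
  qed
  have "X *v v = 0" for v
  proof -
    have "cinner (X *v v) (X *v v) = cinner v (X *v (X *v v))" using herm_cinner[OF HX] by simp
    then have "cinner (X *v v) (X *v v) = 0" using z by simp
    then show ?thesis by (simp add: cinner_self)
  qed
  then have "X = 0" by (simp add: matrix_eq)
  then show ?thesis by (simp add: X_def)
qed

lemma op_sqrt_props:
  assumes A: "pos_op A"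
  shows "pos_op (op_sqrt A) \<and> op_sqrt A ** op_sqrt A = A"
proof -
  obtain S where S: "pos_op S" "S ** S = A" and Sc: "\<forall>Z. Z ** A = A ** Z \<longrightarrow> Z ** S = S ** Z"
    using sqrt_exists[OF A] by blast
  have "\<exists>!S. pos_op S \<and> S ** S = A"
  proof
    show "pos_op S \<and> S ** S = A" using S by blast
    fix R assume "pos_op R \<and> R ** R = A"
    then show "R = S" using sqrt_unique[OF S _ ] Sc by blast
  qed
  then show ?thesis unfolding op_sqrt_def by (rule theI')
qed



lemma herm_neg: "herm A \<Longrightarrow> herm (- A)"
  by (simp add: herm_def adjm_def vec_eq_iff)
lemma qf_neg: "qf (- A) x = - qf A x"
  by (simp add: qf_def neg_mv cinner_minus_right)
lemma trace_scaleR: "trace (r *\<^sub>R (M::complex^'n^'n)) = of_real r * trace M"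
  unfolding trace_def by (simp add: sum_distrib_left) (simp add: scaleR_conv_of_real)

lemma step:
  assumes P: "pos_op P" and e: "norm e = 1" and tau: "0 < \<tau>" "\<tau> < 1"
  shows "pos_op (op_sqrt P ** (mat 1 - \<tau> *\<^sub>R ketbra e e) ** op_sqrt P)"
    and "P - op_sqrt P ** (mat 1 - \<tau> *\<^sub>R ketbra e e) ** op_sqrt P
          = \<tau> *\<^sub>R ketbra (op_sqrt P *v e) (op_sqrt P *v e)"
proof -
  define S where "S = op_sqrt P"
  have S: "pos_op S" "S ** S = P" using op_sqrt_props[OF P] by (auto simp: S_def)
  have adS: "adjm S = S" using S(1) pos_op_iff herm_def by blast
  define M where "M = mat 1 - \<tau> *\<^sub>R ketbra e e"
  have HM: "herm M" unfolding M_def by (intro herm_diff herm_mat1 herm_scaleR herm_ketbra)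
  have qM: "qf M v \<ge> 0" for v
  proof -
    have "qf M v = (norm v)\<^sup>2 - \<tau> * (cmod (cinner e v))\<^sup>2"
      by (simp add: M_def qf_diff qf_mat1 qf_scaleRm qf_ketbra)
    moreover have "cmod (cinner e v) \<le> norm v" using cinner_cs[of e v] e by simp
    then have "(cmod (cinner e v))\<^sup>2 \<le> (norm v)\<^sup>2" by (intro power_mono) simp_all
    then have "\<tau> * (cmod (cinner e v))\<^sup>2 \<le> (norm v)\<^sup>2"
      using tau by (smt (verit) mult_left_le_one_le zero_le_power2)
    ultimately show ?thesis by simp
  qed
  have "pos_op M" using HM qM by (simp add: pos_op_iff)
  then have "pos_op (adjm S ** M ** S)" by (rule pos_congr)
  then have "pos_op (S ** M ** S)" using adS by simp
  then show "pos_op (op_sqrt P ** (mat 1 - \<tau> *\<^sub>R ketbra e e) ** op_sqrt P)"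
    unfolding S_def M_def .
  have "S ** (mat 1 - \<tau> *\<^sub>R ketbra e e) ** S = S ** S - \<tau> *\<^sub>R (S ** ketbra e e ** S)"
    by (simp add: mm_diff_ldistrib mm_diff_rdistrib mm_scaleR_left mm_scaleR_right matrix_mul_assoc)
  also have "S ** ketbra e e ** S = ketbra (S *v e) (S *v e)" by (simp add: mm_ketbra adS)
  finally show "P - op_sqrt P ** (mat 1 - \<tau> *\<^sub>R ketbra e e) ** op_sqrt P
          = \<tau> *\<^sub>R ketbra (op_sqrt P *v e) (op_sqrt P *v e)"
    by (simp add: S(2) S_def[symmetric])
qed

lemma rec_to_zero:
  fixes r eps :: "nat \<Rightarrow> real"
  assumes tau: "0 < \<tau>" "\<tau> < 1" and r0: "\<And>k. r k \<ge> 0"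
    and rec: "\<And>k. r (Suc k) = (1 - \<tau>) * r k + eps k" and eps: "eps \<longlonglongrightarrow> 0"
  shows "r \<longlonglongrightarrow> 0"
proof (rule LIMSEQ_I)
  fix d :: real assume d: "0 < d"
  define h where "h = d / 2"
  have h: "0 < h" "h + h = d" using d by (simp_all add: h_def)
  obtain N where N: "\<And>k. k \<ge> N \<Longrightarrow> norm (eps k - 0) < \<tau> * h"
    using LIMSEQ_D[OF eps, of "\<tau> * h"] tau h by auto
  have bound: "r (N + m) \<le> (1 - \<tau>)^m * r N + h" for m
  proof (induction m)
    case 0 then show ?case using h by simp
  next
    case (Suc m)
    have "eps (N + m) \<le> \<tau> * h" using N[of "N+m"] by simp
    then have "r (N + Suc m) \<le> (1 - \<tau>) * r (N + m) + \<tau> * h" using rec[of "N+m"] by simp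
    also have "\<dots> \<le> (1 - \<tau>) * ((1 - \<tau>)^m * r N + h) + \<tau> * h"
      using Suc tau by (intro add_right_mono mult_left_mono) auto
    also have "\<dots> = (1 - \<tau>)^(Suc m) * r N + h" by (simp add: algebra_simps)
    finally show ?case .
  qed
  have "(\<lambda>m. (1 - \<tau>)^m * r N) \<longlonglongrightarrow> 0 * r N"
    using tau by (intro tendsto_intros LIMSEQ_power_zero) simp
  then have "(\<lambda>m. (1 - \<tau>)^m * r N) \<longlonglongrightarrow> 0" by simp
  from LIMSEQ_D[OF this h(1)] obtain M where M: "\<And>m. m \<ge> M \<Longrightarrow> norm ((1 - \<tau>)^m * r N - 0) < h"
    by blast
  show "\<exists>no. \<forall>n\<ge>no. norm (r n - 0) < d"
  proof (intro exI allI impI)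
    fix n assume n: "n \<ge> N + M"
    define m where "m = n - N"
    have m: "n = N + m" "m \<ge> M" using n by (simp_all add: m_def)
    have "r n \<le> (1 - \<tau>)^m * r N + h" using bound m by simp
    also have "\<dots> < h + h" using M[OF m(2)] by simp
    finally show "norm (r n - 0) < d" using r0[of n] h by simp
  qed
qed

theorem proposition3p1:
  fixes e :: "complex^'n" and \<tau> :: real
    and T :: "nat \<Rightarrow> complex^'n^'n"
    and Q :: "complex^'n^'n"
    and a :: "nat \<Rightarrow> complex" and b y :: "nat \<Rightarrow> complex^'n"
    and B :: "nat \<Rightarrow> complex^'n^'n"
    and Tinf Binf :: "complex^'n^'n"
  assumes e_unit: "norm e = 1"
    and tau: "0 < \<tau>" "\<tau> < 1"
    and T0: "pos_op (T 0)"
    and T_rec: "\<And>k. T (Suc k) = op_sqrt (T k) ** (mat 1 - \<tau> *\<^sub>R ketbra e e) ** op_sqrt (T k)"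
    and Q_def: "Q = mat 1 - ketbra e e"
    and a_def: "\<And>k. a k = cinner e (T k *v e)"
    and b_def: "\<And>k. b k = Q *v (T k *v e)"
    and B_def: "\<And>k. B k = Q ** T k ** Q"
    and y_def: "\<And>k. y k = Q *v (op_sqrt (T k) *v e)"
    and Tinf_def: "Tinf = lim T"
    and Binf_def: "Binf = Q ** Tinf ** Q"
  shows "T \<longlonglongrightarrow> Tinf
    \<and> (\<forall>k. a (Suc k) = of_real (1 - \<tau>) * a k + of_real (\<tau> * (norm (y k))\<^sup>2))
    \<and> (\<lambda>k. of_real (\<tau> * (norm (y k))\<^sup>2)) sums trace (B 0 - Binf)
    \<and> y \<longlonglongrightarrow> 0
    \<and> a \<longlonglongrightarrow> 0
    \<and> b \<longlonglongrightarrow> 0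
    \<and> Tinf *v e = 0
    \<and> (\<forall>x. cinner e (Tinf *v x) = 0)"
proof -
  define S where "S k = op_sqrt (T k)" for k
  have posT: "pos_op (T k)" for k
  proof (induction k)
    case 0 then show ?case by (rule T0)
  next
    case (Suc k) then show ?case using step(1)[OF Suc e_unit tau] T_rec by simp
  qed
  have Sk: "pos_op (S k)" "S k ** S k = T k" for k using op_sqrt_props[OF posT] by (auto simp: S_def)
  have adS: "adjm (S k) = S k" for k using Sk(1) pos_op_iff herm_def by blast
  have diff: "T k - T (Suc k) = \<tau> *\<^sub>R ketbra (S k *v e) (S k *v e)" for k
    using step(2)[OF posT e_unit tau, of k] T_rec[of k] by (simp add: S_def)
  have "convergent (\<lambda>k. - T k)"
  proof (rule mono_conv[where \<beta>=0])
    show "herm (- T k)" for k using posT[of k] pos_op_iff herm_neg by blast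
    show "pos_op (- T (Suc k) - - T k)" for k
      using diff[of k] pos_scaleR[OF pos_ketbra, of \<tau>] tau by (simp add: algebra_simps)
    show "qf (- T k) x \<le> 0 * (norm x)\<^sup>2" for k x using qf_nonneg[OF posT[of k], of x] by (simp add: qf_neg)
  qed
  then obtain L where "(\<lambda>k. - T k) \<longlonglongrightarrow> L" by (auto simp: convergent_def)
  then have "(\<lambda>k. - (- T k)) \<longlonglongrightarrow> - L" by (rule tendsto_minus)
  then have "T \<longlonglongrightarrow> - L" by simp
  then have Tlim: "T \<longlonglongrightarrow> Tinf" unfolding Tinf_def by (metis convergentI convergent_LIMSEQ_iff)
  define r where "r k = (norm (S k *v e))\<^sup>2" for k
  define c where "c k = cinner e (S k *v e)" for k
  have HQ: "herm Q" unfolding Q_def by (intro herm_diff herm_mat1 herm_ketbra)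
  have adQ: "adjm Q = Q" using HQ herm_def by blast
  have ak: "a k = of_real (r k)" for k
  proof -
    have "a k = cinner e (S k *v (S k *v e))" by (simp add: a_def Sk(2)[symmetric] matrix_vector_mul_assoc)
    also have "\<dots> = cinner (S k *v e) (S k *v e)" using cinner_adj[of e "S k"] adS by simp
    finally show ?thesis by (simp add: cinner_self r_def)
  qed
  have ee: "cinner e e = 1" using e_unit by (simp add: cinner_self)
  have yk: "y k = S k *v e - c k *s e" for k
    by (simp add: y_def S_def[symmetric] Q_def matrix_vector_mult_diff_rdistrib ketbra_mv c_def)
  have yn: "(norm (y k))\<^sup>2 = r k - (cmod (c k))\<^sup>2" for k
  proof -
    have "of_real ((norm (y k))\<^sup>2) = cinner (y k) (y k)" by (simp add: cinner_self)
    also have "\<dots> = cinner (S k *v e) (S k *v e) - cnj (c k) * c k"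
      unfolding yk using ee
      by (simp add: cinner_diff_left cinner_diff_right cinner_smult_left cinner_smult_right
          cinner_commute[of "S k *v e" e] c_def[symmetric])
    also have "\<dots> = of_real (r k - (cmod (c k))\<^sup>2)"
      by (simp add: cinner_self r_def cnj_mult_self)
    finally show ?thesis by (simp only: of_real_eq_iff)
  qed
  have aS: "a (Suc k) = of_real (r k - \<tau> * (cmod (c k))\<^sup>2)" for k
  proof -
    have "T (Suc k) = T k - \<tau> *\<^sub>R ketbra (S k *v e) (S k *v e)" using diff[of k] by (simp add: algebra_simps)
    then have "a (Suc k) = a k - of_real \<tau> * (cinner (S k *v e) e * c k)"
      by (simp add: a_def matrix_vector_mult_diff_rdistrib scaleR_mv cinner_diff_right
          cinner_scaleR_right ketbra_mv cinner_smult_right c_def)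
    also have "cinner (S k *v e) e * c k = of_real ((cmod (c k))\<^sup>2)"
      using cinner_commute[of "S k *v e" e] by (simp add: c_def[symmetric] cnj_mult_self)
    finally show ?thesis by (simp add: ak[of k])
  qed
  have recur: "a (Suc k) = of_real (1 - \<tau>) * a k + of_real (\<tau> * (norm (y k))\<^sup>2)" for k
    unfolding aS ak[of k] yn by (simp add: algebra_simps)
  have Bd: "B k - B (Suc k) = \<tau> *\<^sub>R ketbra (y k) (y k)" for k
  proof -
    have "B k - B (Suc k) = Q ** (T k - T (Suc k)) ** Q"
      by (simp add: B_def mm_diff_ldistrib mm_diff_rdistrib)
    also have "\<dots> = \<tau> *\<^sub>R (Q ** ketbra (S k *v e) (S k *v e) ** Q)"
      by (simp add: diff mm_scaleR_left mm_scaleR_right)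
    also have "\<dots> = \<tau> *\<^sub>R ketbra (y k) (y k)"
      by (simp add: mm_ketbra adQ y_def S_def)
    finally show ?thesis .
  qed
  have trd: "of_real (\<tau> * (norm (y k))\<^sup>2) = trace (B k) - trace (B (Suc k))" for k
    using Bd[of k] trace_sub[of "B k" "B (Suc k)"] by (simp add: trace_scaleR trace_ketbra)
  have Blim: "B \<longlonglongrightarrow> Binf"
    unfolding B_def[abs_def] Binf_def by (intro tendsto_mm tendsto_const Tlim)
  have sums: "(\<lambda>k. of_real (\<tau> * (norm (y k))\<^sup>2)) sums trace (B 0 - Binf)"
  proof -
    have "(\<lambda>n. trace (B 0) - trace (B n)) \<longlonglongrightarrow> trace (B 0) - trace Binf"
      by (intro tendsto_intros tendsto_trace Blim)
    then show ?thesis unfolding sums_def trd sum_lessThan_telescope'[of "\<lambda>k. trace (B k)"] trace_sub .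
  qed
  have "(\<lambda>k. complex_of_real (\<tau> * (norm (y k))\<^sup>2)) \<longlonglongrightarrow> 0"
    by (rule summable_LIMSEQ_zero[OF sums_summable[OF sums]])
  then have "(\<lambda>k. Re (complex_of_real (\<tau> * (norm (y k))\<^sup>2))) \<longlonglongrightarrow> Re 0" by (rule tendsto_Re)
  then have ty: "(\<lambda>k. \<tau> * (norm (y k))\<^sup>2) \<longlonglongrightarrow> 0" by simp
  then have "(\<lambda>k. (1/\<tau>) * (\<tau> * (norm (y k))\<^sup>2)) \<longlonglongrightarrow> (1/\<tau>) * 0" by (intro tendsto_intros)
  then have "(\<lambda>k. (norm (y k))\<^sup>2) \<longlonglongrightarrow> 0" using tau by simp
  then have "(\<lambda>k. sqrt ((norm (y k))\<^sup>2)) \<longlonglongrightarrow> sqrt 0" by (rule tendsto_real_sqrt)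
  then have "(\<lambda>k. norm (y k)) \<longlonglongrightarrow> 0" by simp
  then have ylim: "y \<longlonglongrightarrow> 0" by (simp add: tendsto_norm_zero_iff)
  have rrec: "r (Suc k) = (1 - \<tau>) * r k + \<tau> * (norm (y k))\<^sup>2" for k
    using recur[of k] unfolding ak by (simp only: of_real_mult[symmetric] of_real_add[symmetric] of_real_eq_iff)
  have "r \<longlonglongrightarrow> 0"
    by (rule rec_to_zero[OF tau _ rrec ty]) (simp add: r_def)
  then have "(\<lambda>k. complex_of_real (r k)) \<longlonglongrightarrow> of_real 0" by (rule tendsto_of_real)
  then have alim: "a \<longlonglongrightarrow> 0" by (simp add: ak[abs_def])
  have "a \<longlonglongrightarrow> cinner e (Tinf *v e)"
    unfolding a_def[abs_def] by (intro tendsto_cinner tendsto_mv tendsto_const Tlim)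
  then have "cinner e (Tinf *v e) = 0" using alim LIMSEQ_unique by blast
  then have q0: "qf Tinf e = 0" by (simp add: qf_def)
  have posI: "pos_op Tinf" by (rule pos_limit[OF Tlim posT])
  have Te: "Tinf *v e = 0" by (rule pos_qf_zero[OF posI q0])
  have "b \<longlonglongrightarrow> Q *v (Tinf *v e)"
    unfolding b_def[abs_def] by (intro tendsto_mv tendsto_const Tlim)
  then have blim: "b \<longlonglongrightarrow> 0" by (simp add: Te)
  have HI: "herm Tinf" using posI pos_op_iff by blast
  have orth: "\<forall>x. cinner e (Tinf *v x) = 0"
    using herm_cinner[OF HI] Te by simp
  show ?thesis using Tlim recur sums ylim alim blim Te orth by blast
qed


end
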